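(* Let $G$ be a finite group. On the set $\widetilde{\mathcal{PD}}(G)$ define $(c^{(1)},\kappa_R^{(1)},\kappa_L^{(1)},b^{(1)},a^{(1)})\sim(c^{(2)},\kappa_R^{(2)},\kappa_L^{(2)},b^{(2)},a^{(2)})$ if (i) $a^{(1)}(g)=a^{(2)}(g)=:a(g)$ for all $g\in G$, and (ii) there exist $m\in C^1(G,\mathbb Z_2\oplus\mathbb Z_2)$ and $\sigma\in C^2(G,\mathrm U(1)\oplus\mathrm U(1))$ such that for all $g,h,k\in G$: $\kappa_R^{(2)}(g,h)=d^1_am(g,h)+\kappa_R^{(1)}(g,h)$, $\kappa_L^{(2)}(g,h)=d^1_ab^{(2)}(g,h)-d^1_ab^{(1)}(g,h)-d^1_am(g,h)+\kappa_L^{(1)}(g,h)$, $c^{(2)}(g,h,k)=(-1)^{\kappa_L^{(1)}(g,h)\cdot m^{a(gh)}(k)}(-1)^{(b^{(2)}(g)-b^{(1)}(g)-m(g))\cdot(\kappa_R^{(2)})^{a(g)}(h,k)}\,d^2_a\sigma(g,h,k)\,c^{(1)}(g,h,k)$. Then $\sim$ is an equivalence relation on $\widetilde{\mathcal{PD}}(G)$.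
   Context: $\mathbb Z_2=\{0,1\}$ (additive group), $\mathrm U(1)$ multiplicative. For $A\in\{\mathbb Z_2,\mathrm U(1)\}$, $A\oplus A$ has componentwise group operation and the $\mathbb Z_2$-action $x^{a}=\begin{pmatrix}0&1\\1&0\end{pmatrix}^ax$ (swap components when $a=1$). $C^n(G,A\oplus A)$ denotes all maps $G^n\to A\oplus A$; $H^1(G,\mathbb Z_2)$ denotes group homomorphisms $G\to\mathbb Z_2$. For $a\in H^1(G,\mathbb Z_2)$: on $\mathbb Z_2\oplus\mathbb Z_2$-valued cochains, $d^1_ax(g,h)=x^{a(g)}(h)+x(g)-x(gh)$, $d^2_ay(g,h,k)=y^{a(g)}(h,k)+y(g,hk)-y(gh,k)-y(g,h)$; on $\mathrm U(1)\oplus\mathrm U(1)$-valued cochains (multiplicatively), $d^2_ay(g,h,k)=\frac{y^{a(g)}(h,k)\,y(g,hk)}{y(gh,k)\,y(g,h)}$, $d^3_az(g,h,k,f)=\frac{z^{a(g)}(h,k,f)\,z(g,hk,f)\,z(g,h,k)}{z(gh,k,f)\,z(g,h,kf)}$. For $x,y\in\mathbb Z_2\oplus\mathbb Z_2$, $x\cdot y:=(x_+y_+,x_-y_-)$ (componentwise ring product of $\mathbb Z_2$) and $(-1)^x:=((-1)^{x_+},(-1)^{x_-})\in\mathrm U(1)\oplus\mathrm U(1)$. $\widetilde{\mathcal{PD}}(G)$ is the set of pentads $(c,\kappa_R,\kappa_L,b,a)$ with $c\in C^3(G,\mathrm U(1)\oplus\mathrm U(1))$, $\kappa_R,\kappa_L\in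 C^2(G,\mathbb Z_2\oplus\mathbb Z_2)$, $b\in C^1(G,\mathbb Z_2\oplus\mathbb Z_2)$, $a\in H^1(G,\mathbb Z_2)$ such that $d^1_ab=\kappa_L+\kappa_R$, $d^2_a\kappa_R=0$, $d^2_a\kappa_L=0$, and $d^3_ac(g,h,k,f)=(-1)^{\kappa_L(g,h)\cdot\kappa_R^{a(gh)}(k,f)}$ for all $g,h,k,f\in G$. *)

theory Defs
  imports Complex_Main "HOL-Library.Z2" "HOL-Algebra.Group"
begin

type_synonym z2z2 = "bit \<times> bit"
type_synonym u1u1 = "complex \<times> complex"  (* U(1) \<oplus> U(1), values constrained to norm 1 *)

text \<open>Z_2 action on A \<oplus> A: swap components when a = 1.\<close>
definition swp :: "bit \<Rightarrow> 'x \<times> 'x \<Rightarrow> 'x \<times> 'x" where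
  "swp a x = (if a = 1 then (snd x, fst x) else x)"

definition zadd :: "z2z2 \<Rightarrow> z2z2 \<Rightarrow> z2z2" where
  "zadd x y = (fst x + fst y, snd x + snd y)"
definition zsub :: "z2z2 \<Rightarrow> z2z2 \<Rightarrow> z2z2" where
  "zsub x y = (fst x - fst y, snd x - snd y)"
definition zdot :: "z2z2 \<Rightarrow> z2z2 \<Rightarrow> z2z2" where
  "zdot x y = (fst x * fst y, snd x * snd y)"

definition umul :: "u1u1 \<Rightarrow> u1u1 \<Rightarrow> u1u1" where
  "umul p q = (fst p * fst q, snd p * snd q)"
definition udiv :: "u1u1 \<Rightarrow> u1u1 \<Rightarrow> u1u1" where
  "udiv p q = (fst p / fst q, snd p / snd q)"

definition neg1 :: "bit \<Rightarrow> complex" where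
  "neg1 x = (if x = 1 then -1 else 1)"

definition sgnp :: "z2z2 \<Rightarrow> u1u1" where
  "sgnp x = (neg1 (fst x), neg1 (snd x))"

definition is_u1 :: "u1u1 \<Rightarrow> bool" where
  "is_u1 p \<longleftrightarrow> norm (fst p) = 1 \<and> norm (snd p) = 1"

text \<open>Cochains G^n \<rightarrow> A \<oplus> A are curried HOL functions; only values on the carrier matter.\<close>

definition H1 :: "('g, 'b) monoid_scheme \<Rightarrow> ('g \<Rightarrow> bit) set" where
  "H1 G = {a. \<forall>g\<in>carrier G. \<forall>h\<in>carrier G. a (g \<otimes>\<^bsub>G\<^esub> h) = a g + a h}"

definition d1z :: "('g, 'b) monoid_scheme \<Rightarrow> ('g \<Rightarrow> bit) \<Rightarrow> ('g \<Rightarrow> z2z2) \<Rightarrow> 'g \<Rightarrow> 'g \<Rightarrow> z2z2" where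
  "d1z G a x g h = zsub (zadd (swp (a g) (x h)) (x g)) (x (g \<otimes>\<^bsub>G\<^esub> h))"

definition d2z :: "('g, 'b) monoid_scheme \<Rightarrow> ('g \<Rightarrow> bit) \<Rightarrow> ('g \<Rightarrow> 'g \<Rightarrow> z2z2) \<Rightarrow> 'g \<Rightarrow> 'g \<Rightarrow> 'g \<Rightarrow> z2z2" where
  "d2z G a y g h k = zsub (zsub (zadd (swp (a g) (y h k)) (y g (h \<otimes>\<^bsub>G\<^esub> k)))
                              (y (g \<otimes>\<^bsub>G\<^esub> h) k)) (y g h)"

definition d2u :: "('g, 'b) monoid_scheme \<Rightarrow> ('g \<Rightarrow> bit) \<Rightarrow> ('g \<Rightarrow> 'g \<Rightarrow> u1u1) \<Rightarrow> 'g \<Rightarrow> 'g \<Rightarrow> 'g \<Rightarrow> u1u1" where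
  "d2u G a y g h k = udiv (umul (swp (a g) (y h k)) (y g (h \<otimes>\<^bsub>G\<^esub> k)))
                          (umul (y (g \<otimes>\<^bsub>G\<^esub> h) k) (y g h))"

definition d3u :: "('g, 'b) monoid_scheme \<Rightarrow> ('g \<Rightarrow> bit) \<Rightarrow> ('g \<Rightarrow> 'g \<Rightarrow> 'g \<Rightarrow> u1u1) \<Rightarrow> 'g \<Rightarrow> 'g \<Rightarrow> 'g \<Rightarrow> 'g \<Rightarrow> u1u1" where
  "d3u G a z g h k f = udiv (umul (umul (swp (a g) (z h k f)) (z g (h \<otimes>\<^bsub>G\<^esub> k) f)) (z g h k))
                            (umul (z (g \<otimes>\<^bsub>G\<^esub> h) k f) (z g h (k \<otimes>\<^bsub>G\<^esub> f)))"

type_synonym 'g pentad =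
  "('g \<Rightarrow> 'g \<Rightarrow> 'g \<Rightarrow> u1u1) \<times> ('g \<Rightarrow> 'g \<Rightarrow> z2z2) \<times> ('g \<Rightarrow> 'g \<Rightarrow> z2z2) \<times> ('g \<Rightarrow> z2z2) \<times> ('g \<Rightarrow> bit)"

definition PDt :: "('g, 'b) monoid_scheme \<Rightarrow> 'g pentad set" where
  "PDt G = {(c, kR, kL, b, a).
     (\<forall>g\<in>carrier G. \<forall>h\<in>carrier G. \<forall>k\<in>carrier G. is_u1 (c g h k)) \<and>
     a \<in> H1 G \<and>
     (\<forall>g\<in>carrier G. \<forall>h\<in>carrier G. d1z G a b g h = zadd (kL g h) (kR g h)) \<and>
     (\<forall>g\<in>carrier G. \<forall>h\<in>carrier G. \<forall>k\<in>carrier G. d2z G a kR g h k = (0, 0)) \<and>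
     (\<forall>g\<in>carrier G. \<forall>h\<in>carrier G. \<forall>k\<in>carrier G. d2z G a kL g h k = (0, 0)) \<and>
     (\<forall>g\<in>carrier G. \<forall>h\<in>carrier G. \<forall>k\<in>carrier G. \<forall>f\<in>carrier G.
        d3u G a c g h k f = sgnp (zdot (kL g h) (swp (a (g \<otimes>\<^bsub>G\<^esub> h)) (kR k f))))}"

definition pd_rel :: "('g, 'b) monoid_scheme \<Rightarrow> ('g pentad \<times> 'g pentad) set" where
  "pd_rel G = {((c1, kR1, kL1, b1, a1), (c2, kR2, kL2, b2, a2)).
     (c1, kR1, kL1, b1, a1) \<in> PDt G \<and> (c2, kR2, kL2, b2, a2) \<in> PDt G \<and>
     (\<forall>g\<in>carrier G. a1 g = a2 g) \<and>
     (\<exists>(m :: 'g \<Rightarrow> z2z2) (\<sigma> :: 'g \<Rightarrow> 'g \<Rightarrow> u1u1).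
        (\<forall>g\<in>carrier G. \<forall>h\<in>carrier G. is_u1 (\<sigma> g h)) \<and>
        (\<forall>g\<in>carrier G. \<forall>h\<in>carrier G. \<forall>k\<in>carrier G.
           kR2 g h = zadd (d1z G a1 m g h) (kR1 g h) \<and>
           kL2 g h = zadd (zsub (zsub (d1z G a1 b2 g h) (d1z G a1 b1 g h)) (d1z G a1 m g h)) (kL1 g h) \<and>
           c2 g h k = umul (umul (umul
                 (sgnp (zdot (kL1 g h) (swp (a1 (g \<otimes>\<^bsub>G\<^esub> h)) (m k))))
                 (sgnp (zdot (zsub (zsub (b2 g) (b1 g)) (m g)) (swp (a1 g) (kR2 h k)))))
                 (d2u G a1 \<sigma> g h k)) (c1 g h k)))}"

end

theory Submission
  imports Defs
begin

lemma bit_add_self[simp]: "(x::bit) + x = 0" by (cases x) simp_all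
lemma bit_add_self2[simp]: "(x::bit) + (x + y) = y" by (cases x) simp_all

lemma zsub_eq: "zsub x y = zadd x y" by (simp add: zsub_def zadd_def)
lemma zadd_comm: "zadd x y = zadd y x" by (simp only: zadd_def add.commute)
lemma zadd_assoc: "zadd (zadd x y) z = zadd x (zadd y z)" by (simp only: zadd_def prod.sel add.assoc)
lemma zadd_lcomm: "zadd x (zadd y z) = zadd y (zadd x z)" by (simp only: zadd_def prod.sel add.left_commute)
lemma zadd_self: "zadd x x = (0,0)" by (simp add: zadd_def)
lemma zadd_self2: "zadd x (zadd x y) = y" by (simp only: zadd_def prod.sel bit_add_self2 prod.collapse)
lemma zadd_0L: "zadd (0,0) x = x" by (simp only: zadd_def prod.sel add_0_left prod.collapse)
lemma zadd_0R: "zadd x (0,0) = x" by (simp only: zadd_def prod.sel add_0_right prod.collapse)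
lemma zdot_comm: "zdot x y = zdot y x" by (simp add: zdot_def mult.commute)
lemma zdot_distL: "zdot (zadd x y) z = zadd (zdot x z) (zdot y z)" by (simp only: zdot_def zadd_def prod.sel distrib_right)
lemma zdot_distR: "zdot z (zadd x y) = zadd (zdot z x) (zdot z y)" by (simp only: zdot_def zadd_def prod.sel distrib_left)
lemma zdot_0L: "zdot (0,0) x = (0,0)" by (simp add: zdot_def)
lemma zdot_0R: "zdot x (0,0) = (0,0)" by (simp add: zdot_def)
lemma swp_zadd: "swp a (zadd x y) = zadd (swp a x) (swp a y)" by (simp add: swp_def zadd_def)
lemma swp_zdot: "swp a (zdot x y) = zdot (swp a x) (swp a y)" by (simp add: swp_def zdot_def)
lemma swp_swp: "swp a (swp b x) = swp (a+b) x"
  by (cases a; cases b) (simp_all add: swp_def)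
lemma swp_0: "swp 0 x = x" by (simp add: swp_def)
lemma swp_00: "swp a (0,0) = (0,0)" by (simp add: swp_def)

lemmas znorm = zsub_eq zadd_assoc zadd_self zadd_self2 zadd_0L zadd_0R zdot_distL zdot_distR
  zdot_0L zdot_0R swp_zadd swp_zdot swp_swp swp_0 swp_00

lemma key_trans:
  fixes A B :: bit
  assumes "kL2 = zadd (zsub (zsub (zsub (zadd (swp A b2h) b2g) b2gh) (zsub (zadd (swp A b1h) b1g) b1gh)) (zsub (zadd (swp A mh) mg) mgh)) kL1"
  and "kR3 = zadd (zsub (zadd (swp B m'k) m'h) m'hk) kR2"
  shows "zadd (zadd (zadd (zdot kL2 (swp (A+B) m'k)) (zdot (zsub (zsub b3g b2g) m'g) (swp A kR3))) (zdot kL1 (swp (A+B) mk))) (zdot (zsub (zsub b2g b1g) mg) (swp A kR2))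
   = zadd (zadd (zdot kL1 (swp (A+B) (zadd mk m'k))) (zdot (zsub (zsub b3g b1g) (zadd mg m'g)) (swp A kR3)))
      (zsub (zsub (zadd (swp A (zdot (zsub (zsub b2h b1h) mh) (swp B m'k))) (zdot (zsub (zsub b2g b1g) mg) (swp A m'hk))) (zdot (zsub (zsub b2gh b1gh) mgh) (swp (A+B) m'k))) (zdot (zsub (zsub b2g b1g) mg) (swp A m'h)))"
  unfolding assms
  by (simp add: znorm zadd_comm zadd_lcomm zdot_comm)


lemma key_sym:
  fixes A B :: bit
  assumes "kL2 = zadd (zsub (zsub (zsub (zadd (swp A b2h) b2g) b2gh) (zsub (zadd (swp A b1h) b1g) b1gh)) (zsub (zadd (swp A mh) mg) mgh)) kL1"
  and "kR2 = zadd (zsub (zadd (swp B mk) mh) mhk) kR1"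
  shows "zadd (zadd (zadd (zdot kL2 (swp (A+B) mk)) (zdot (zsub (zsub b1g b2g) mg) (swp A kR1))) (zdot kL1 (swp (A+B) mk))) (zdot (zsub (zsub b2g b1g) mg) (swp A kR2))
   = zsub (zsub (zadd (swp A (zdot (zsub (zsub b2h b1h) mh) (swp B mk))) (zdot (zsub (zsub b2g b1g) mg) (swp A mhk))) (zdot (zsub (zsub b2gh b1gh) mgh) (swp (A+B) mk))) (zdot (zsub (zsub b2g b1g) mg) (swp A mh))"
  unfolding assms
  by (simp add: znorm zadd_comm zadd_lcomm zdot_comm)

lemma neg1_add: "neg1 (x + y) = neg1 x * neg1 y"
  by (cases x; cases y) (simp_all add: neg1_def)
lemma neg1_sq: "neg1 x * neg1 x = 1"
  by (cases x) (simp_all add: neg1_def)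
lemma neg1_inv: "inverse (neg1 x) = neg1 x"
  by (cases x) (simp_all add: neg1_def)

definition uinv :: "u1u1 \<Rightarrow> u1u1" where
  "uinv p = (inverse (fst p), inverse (snd p))"

lemma sgnp_zadd: "sgnp (zadd x y) = umul (sgnp x) (sgnp y)"
  by (simp only: sgnp_def zadd_def umul_def prod.sel neg1_add)
lemma swp_sgnp: "swp a (sgnp x) = sgnp (swp a x)" by (simp add: swp_def sgnp_def)
lemma udiv_sgnp: "udiv p (sgnp x) = umul p (sgnp x)"
  by (simp only: udiv_def umul_def sgnp_def prod.sel divide_inverse neg1_inv)
lemma udiv_umul: "udiv p (umul q r) = udiv (udiv p q) r"
  by (simp add: udiv_def umul_def)
lemma umul_assoc: "umul (umul x y) z = umul x (umul y z)" by (simp add: umul_def mult.assoc)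
lemma umul_comm: "umul x y = umul y x" by (simp add: umul_def mult.commute)
lemma umul_lcomm: "umul x (umul y z) = umul y (umul x z)" by (simp add: umul_def mult.left_commute)
lemma sgnp_sq: "umul (sgnp x) (sgnp x) = (1,1)"
  by (simp add: sgnp_def umul_def neg1_sq)

lemma d2u_mul: "d2u G a (\<lambda>x y. umul (s x y) (t x y)) g h k = umul (d2u G a s g h k) (d2u G a t g h k)"
  by (cases "a g") (simp_all add: d2u_def umul_def udiv_def swp_def divide_inverse inverse_mult_distrib mult_ac)

lemma d2u_inv: "d2u G a (\<lambda>x y. uinv (s x y)) g h k = uinv (d2u G a s g h k)"
  by (cases "a g") (simp_all add: d2u_def umul_def udiv_def uinv_def swp_def divide_inverse inverse_mult_distrib mult_ac)

lemma d2u_sgnp: "d2u G a (\<lambda>x y. sgnp (f x y)) g h k = sgnp (d2z G a f g h k)"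
  unfolding d2u_def d2z_def
  by (simp only: zsub_eq sgnp_zadd swp_sgnp udiv_umul udiv_sgnp umul_assoc umul_comm umul_lcomm)

lemma is_u1_mul: "is_u1 x \<Longrightarrow> is_u1 y \<Longrightarrow> is_u1 (umul x y)"
  by (simp add: is_u1_def umul_def norm_mult)
lemma is_u1_div: "is_u1 x \<Longrightarrow> is_u1 y \<Longrightarrow> is_u1 (udiv x y)"
  by (simp add: is_u1_def udiv_def norm_divide)
lemma is_u1_swp: "is_u1 x \<Longrightarrow> is_u1 (swp a x)"
  by (simp add: is_u1_def swp_def)
lemma is_u1_inv: "is_u1 x \<Longrightarrow> is_u1 (uinv x)"
  by (simp add: is_u1_def uinv_def norm_inverse)
lemma is_u1_sgnp: "is_u1 (sgnp x)"
  by (simp add: is_u1_def sgnp_def neg1_def)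

lemma final_sym:
  assumes "umul (umul (umul S1 S2) U1) U2 = Z" "umul Z Z = (1,1)" "is_u1 D"
  shows "c1 = umul (umul (umul S1 S2) (umul (uinv D) Z)) (umul (umul (umul U1 U2) D) c1)"
proof -
  have nz: "fst D \<noteq> 0" "snd D \<noteq> 0" using assms(3) by (auto simp: is_u1_def)
  have e1: "fst S1 * fst S2 * fst U1 * fst U2 = fst Z" "snd S1 * snd S2 * snd U1 * snd U2 = snd Z"
    using assms(1) by (auto simp: umul_def)
  have e2: "fst Z * fst Z = 1" "snd Z * snd Z = 1" using assms(2) by (auto simp: umul_def)
  have "fst S1 * fst S2 * (inverse (fst D) * fst Z) * (fst U1 * fst U2 * fst D * fst c1)
      = (fst S1 * fst S2 * fst U1 * fst U2) * fst Z * (inverse (fst D) * fst D) * fst c1"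
    by (simp add: mult_ac)
  also have "\<dots> = fst c1" using e1 e2 nz by simp
  finally have f: "fst S1 * fst S2 * (inverse (fst D) * fst Z) * (fst U1 * fst U2 * fst D * fst c1) = fst c1" .
  have "snd S1 * snd S2 * (inverse (snd D) * snd Z) * (snd U1 * snd U2 * snd D * snd c1)
      = (snd S1 * snd S2 * snd U1 * snd U2) * snd Z * (inverse (snd D) * snd D) * snd c1"
    by (simp add: mult_ac)
  also have "\<dots> = snd c1" using e1 e2 nz by simp
  finally have s: "snd S1 * snd S2 * (inverse (snd D) * snd Z) * (snd U1 * snd U2 * snd D * snd c1) = snd c1" .
  show ?thesis using f s by (simp add: umul_def uinv_def prod_eq_iff)
qed

lemma final_trans:
  assumes "umul (umul (umul T1 T2) U1) U2 = umul (umul S1 S2) Z"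
  and "c3 = umul (umul (umul T1 T2) D') c2" "c2 = umul (umul (umul U1 U2) D) c1"
  shows "c3 = umul (umul (umul S1 S2) (umul (umul D D') Z)) c1"
proof -
  have e1: "fst T1 * fst T2 * fst U1 * fst U2 = fst S1 * fst S2 * fst Z" "snd T1 * snd T2 * snd U1 * snd U2 = snd S1 * snd S2 * snd Z"
    using assms(1) by (auto simp: umul_def)
  have "fst T1 * fst T2 * fst D' * (fst U1 * fst U2 * fst D * fst c1) = (fst T1 * fst T2 * fst U1 * fst U2) * fst D * fst D' * fst c1"
    "snd T1 * snd T2 * snd D' * (snd U1 * snd U2 * snd D * snd c1) = (snd T1 * snd T2 * snd U1 * snd U2) * snd D * snd D' * snd c1"
    by (simp_all add: mult_ac)
  then show ?thesis using e1 assms(2,3) by (simp add: umul_def prod_eq_iff mult_ac)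
qed


lemma sgnp_00: "sgnp (0,0) = (1,1)" by (simp add: sgnp_def neg1_def)
lemma umul_11: "umul (1,1) x = x" by (simp add: umul_def)

lemma H1_add: "a \<in> H1 G \<Longrightarrow> g \<in> carrier G \<Longrightarrow> h \<in> carrier G \<Longrightarrow> a (g \<otimes>\<^bsub>G\<^esub> h) = a g + a h"
  by (simp add: H1_def)

lemma d1z_add: "d1z G a (\<lambda>x. zadd (m x) (m' x)) g h = zadd (d1z G a m g h) (d1z G a m' g h)"
  unfolding d1z_def by (simp add: znorm zadd_comm zadd_lcomm)

definition W where
  "W G a1 c1 kR1 kL1 b1 c2 kR2 kL2 b2 m \<sigma> \<longleftrightarrow>
        (\<forall>g\<in>carrier G. \<forall>h\<in>carrier G. is_u1 (\<sigma> g h)) \<and>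
        (\<forall>g\<in>carrier G. \<forall>h\<in>carrier G. \<forall>k\<in>carrier G.
           kR2 g h = zadd (d1z G a1 m g h) (kR1 g h) \<and>
           kL2 g h = zadd (zsub (zsub (d1z G a1 b2 g h) (d1z G a1 b1 g h)) (d1z G a1 m g h)) (kL1 g h) \<and>
           c2 g h k = umul (umul (umul
                 (sgnp (zdot (kL1 g h) (swp (a1 (g \<otimes>\<^bsub>G\<^esub> h)) (m k))))
                 (sgnp (zdot (zsub (zsub (b2 g) (b1 g)) (m g)) (swp (a1 g) (kR2 h k)))))
                 (d2u G a1 \<sigma> g h k)) (c1 g h k))"

lemma pd_rel_iff:
  "((c1,kR1,kL1,b1,a1),(c2,kR2,kL2,b2,a2)) \<in> pd_rel G \<longleftrightarrow>
    (c1,kR1,kL1,b1,a1) \<in> PDt G \<and> (c2,kR2,kL2,b2,a2) \<in> PDt G \<and> (\<forall>g\<in>carrier G. a1 g = a2 g) \<and>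
    (\<exists>m \<sigma>. W G a1 c1 kR1 kL1 b1 c2 kR2 kL2 b2 m \<sigma>)"
  by (simp add: pd_rel_def W_def)

lemma W_cong:
  assumes grp: "group G" and eq: "\<forall>g\<in>carrier G. a g = a' g"
  shows "W G a c1 kR1 kL1 b1 c2 kR2 kL2 b2 m \<sigma> = W G a' c1 kR1 kL1 b1 c2 kR2 kL2 b2 m \<sigma>"
proof -
  have cl: "\<And>g h. g \<in> carrier G \<Longrightarrow> h \<in> carrier G \<Longrightarrow> g \<otimes>\<^bsub>G\<^esub> h \<in> carrier G"
    using grp by (simp add: group.is_monoid monoid.m_closed)
  have e1: "\<And>g. g \<in> carrier G \<Longrightarrow> a g = a' g" using eq by blast
  have e2: "\<And>g h. g \<in> carrier G \<Longrightarrow> h \<in> carrier G \<Longrightarrow> a (g \<otimes>\<^bsub>G\<^esub> h) = a' (g \<otimes>\<^bsub>G\<^esub> h)"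
    using eq cl by blast
  show ?thesis unfolding W_def d1z_def d2u_def
    by (auto simp: e1 e2)
qed

lemma W_refl: "W G a c kR kL b c kR kL b (\<lambda>_. (0,0)) (\<lambda>_ _. (1,1))"
  unfolding W_def d1z_def d2u_def
  by (simp add: znorm swp_def zdot_0R zdot_0L sgnp_00 umul_def udiv_def is_u1_def)

lemma PDt_H1: "(c,kR,kL,b,a) \<in> PDt G \<Longrightarrow> a \<in> H1 G"
  by (simp add: PDt_def)


lemma W_sym:
  assumes grp: "group G" and aH: "a \<in> H1 G"
  and w: "W G a c1 kR1 kL1 b1 c2 kR2 kL2 b2 m \<sigma>"
  shows "W G a c2 kR2 kL2 b2 c1 kR1 kL1 b1 m
     (\<lambda>x y. umul (uinv (\<sigma> x y)) (sgnp (zdot (zsub (zsub (b2 x) (b1 x)) (m x)) (swp (a x) (m y)))))"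
proof -
  have cl: "\<And>g h. g \<in> carrier G \<Longrightarrow> h \<in> carrier G \<Longrightarrow> g \<otimes>\<^bsub>G\<^esub> h \<in> carrier G"
    using grp by (simp add: group.is_monoid monoid.m_closed)
  have su: "\<And>x y. x \<in> carrier G \<Longrightarrow> y \<in> carrier G \<Longrightarrow> is_u1 (\<sigma> x y)"
    using w by (simp add: W_def)
  have R: "\<And>x y. x \<in> carrier G \<Longrightarrow> y \<in> carrier G \<Longrightarrow> kR2 x y = zadd (d1z G a m x y) (kR1 x y)"
    using w unfolding W_def by blast
  have L: "\<And>x y. x \<in> carrier G \<Longrightarrow> y \<in> carrier G \<Longrightarrow>
     kL2 x y = zadd (zsub (zsub (d1z G a b2 x y) (d1z G a b1 x y)) (d1z G a m x y)) (kL1 x y)"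
    using w unfolding W_def by blast
  have C: "\<And>g h k. g \<in> carrier G \<Longrightarrow> h \<in> carrier G \<Longrightarrow> k \<in> carrier G \<Longrightarrow>
     c2 g h k = umul (umul (umul
                 (sgnp (zdot (kL1 g h) (swp (a (g \<otimes>\<^bsub>G\<^esub> h)) (m k))))
                 (sgnp (zdot (zsub (zsub (b2 g) (b1 g)) (m g)) (swp (a g) (kR2 h k)))))
                 (d2u G a \<sigma> g h k)) (c1 g h k)"
    using w unfolding W_def by blast
  show ?thesis unfolding W_def
  proof (intro conjI ballI)
    fix g h assume g: "g \<in> carrier G" and h: "h \<in> carrier G"
    show "is_u1 (umul (uinv (\<sigma> g h)) (sgnp (zdot (zsub (zsub (b2 g) (b1 g)) (m g)) (swp (a g) (m h)))))"
      by (intro is_u1_mul is_u1_inv is_u1_sgnp su g h)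
  next
    fix g h k assume g: "g \<in> carrier G" and h: "h \<in> carrier G" and k: "k \<in> carrier G"
    show "kR1 g h = zadd (d1z G a m g h) (kR2 g h)"
      using R[OF g h] by (simp add: zadd_self2)
    show "kL1 g h = zadd (zsub (zsub (d1z G a b1 g h) (d1z G a b2 g h)) (d1z G a m g h)) (kL2 g h)"
      using L[OF g h] by (simp add: zsub_eq zadd_assoc zadd_comm zadd_lcomm zadd_self zadd_self2 zadd_0L zadd_0R)
    define Dz where "Dz = d2z G a (\<lambda>x y. zdot (zsub (zsub (b2 x) (b1 x)) (m x)) (swp (a x) (m y))) g h k"
    have agh: "a (g \<otimes>\<^bsub>G\<^esub> h) = a g + a h" using H1_add[OF aH g h] .
    have K: "zadd (zadd (zadd (zdot (kL2 g h) (swp (a g + a h) (m k))) (zdot (zsub (zsub (b1 g) (b2 g)) (m g)) (swp (a g) (kR1 h k))))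
              (zdot (kL1 g h) (swp (a g + a h) (m k)))) (zdot (zsub (zsub (b2 g) (b1 g)) (m g)) (swp (a g) (kR2 h k))) = Dz"
      unfolding Dz_def d2z_def agh
      by (rule key_sym) (use L[OF g h] R[OF h k] in \<open>simp_all add: d1z_def\<close>)
    have K2: "umul (umul (umul (sgnp (zdot (kL2 g h) (swp (a (g \<otimes>\<^bsub>G\<^esub> h)) (m k))))
        (sgnp (zdot (zsub (zsub (b1 g) (b2 g)) (m g)) (swp (a g) (kR1 h k)))))
        (sgnp (zdot (kL1 g h) (swp (a (g \<otimes>\<^bsub>G\<^esub> h)) (m k)))))
        (sgnp (zdot (zsub (zsub (b2 g) (b1 g)) (m g)) (swp (a g) (kR2 h k)))) = sgnp Dz"
      using arg_cong[OF K, of sgnp] unfolding agh sgnp_zadd .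
    have Du: "is_u1 (d2u G a \<sigma> g h k)"
      unfolding d2u_def by (intro is_u1_div is_u1_mul is_u1_swp su cl g h k)
    have dd: "d2u G a (\<lambda>x y. umul (uinv (\<sigma> x y)) (sgnp (zdot (zsub (zsub (b2 x) (b1 x)) (m x)) (swp (a x) (m y))))) g h k
       = umul (uinv (d2u G a \<sigma> g h k)) (sgnp Dz)"
      unfolding Dz_def d2u_mul d2u_inv d2u_sgnp ..
    show "c1 g h k = umul (umul (umul (sgnp (zdot (kL2 g h) (swp (a (g \<otimes>\<^bsub>G\<^esub> h)) (m k))))
                 (sgnp (zdot (zsub (zsub (b1 g) (b2 g)) (m g)) (swp (a g) (kR1 h k)))))
                 (d2u G a (\<lambda>x y. umul (uinv (\<sigma> x y)) (sgnp (zdot (zsub (zsub (b2 x) (b1 x)) (m x)) (swp (a x) (m y))))) g h k))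
                 (c2 g h k)"
      unfolding dd C[OF g h k]
      by (rule final_sym[OF K2 sgnp_sq Du])
  qed
qed


lemma W_trans:
  assumes grp: "group G" and aH: "a \<in> H1 G"
  and w1: "W G a c1 kR1 kL1 b1 c2 kR2 kL2 b2 m \<sigma>"
  and w2: "W G a c2 kR2 kL2 b2 c3 kR3 kL3 b3 m' \<sigma>'"
  shows "W G a c1 kR1 kL1 b1 c3 kR3 kL3 b3 (\<lambda>x. zadd (m x) (m' x))
     (\<lambda>x y. umul (umul (\<sigma> x y) (\<sigma>' x y)) (sgnp (zdot (zsub (zsub (b2 x) (b1 x)) (m x)) (swp (a x) (m' y)))))"
proof -
  have su: "\<And>x y. x \<in> carrier G \<Longrightarrow> y \<in> carrier G \<Longrightarrow> is_u1 (\<sigma> x y)"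
    using w1 by (simp add: W_def)
  have su': "\<And>x y. x \<in> carrier G \<Longrightarrow> y \<in> carrier G \<Longrightarrow> is_u1 (\<sigma>' x y)"
    using w2 by (simp add: W_def)
  have R: "\<And>x y. x \<in> carrier G \<Longrightarrow> y \<in> carrier G \<Longrightarrow> kR2 x y = zadd (d1z G a m x y) (kR1 x y)"
    using w1 unfolding W_def by blast
  have L: "\<And>x y. x \<in> carrier G \<Longrightarrow> y \<in> carrier G \<Longrightarrow>
     kL2 x y = zadd (zsub (zsub (d1z G a b2 x y) (d1z G a b1 x y)) (d1z G a m x y)) (kL1 x y)"
    using w1 unfolding W_def by blast
  have C: "\<And>g h k. g \<in> carrier G \<Longrightarrow> h \<in> carrier G \<Longrightarrow> k \<in> carrier G \<Longrightarrow>
     c2 g h k = umul (umul (umul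
                 (sgnp (zdot (kL1 g h) (swp (a (g \<otimes>\<^bsub>G\<^esub> h)) (m k))))
                 (sgnp (zdot (zsub (zsub (b2 g) (b1 g)) (m g)) (swp (a g) (kR2 h k)))))
                 (d2u G a \<sigma> g h k)) (c1 g h k)"
    using w1 unfolding W_def by blast
  have R': "\<And>x y. x \<in> carrier G \<Longrightarrow> y \<in> carrier G \<Longrightarrow> kR3 x y = zadd (d1z G a m' x y) (kR2 x y)"
    using w2 unfolding W_def by blast
  have L': "\<And>x y. x \<in> carrier G \<Longrightarrow> y \<in> carrier G \<Longrightarrow>
     kL3 x y = zadd (zsub (zsub (d1z G a b3 x y) (d1z G a b2 x y)) (d1z G a m' x y)) (kL2 x y)"
    using w2 unfolding W_def by blast
  have C': "\<And>g h k. g \<in> carrier G \<Longrightarrow> h \<in> carrier G \<Longrightarrow> k \<in> carrier G \<Longrightarrow>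
     c3 g h k = umul (umul (umul
                 (sgnp (zdot (kL2 g h) (swp (a (g \<otimes>\<^bsub>G\<^esub> h)) (m' k))))
                 (sgnp (zdot (zsub (zsub (b3 g) (b2 g)) (m' g)) (swp (a g) (kR3 h k)))))
                 (d2u G a \<sigma>' g h k)) (c2 g h k)"
    using w2 unfolding W_def by blast
  show ?thesis unfolding W_def
  proof (intro conjI ballI)
    fix g h assume g: "g \<in> carrier G" and h: "h \<in> carrier G"
    show "is_u1 (umul (umul (\<sigma> g h) (\<sigma>' g h)) (sgnp (zdot (zsub (zsub (b2 g) (b1 g)) (m g)) (swp (a g) (m' h)))))"
      by (intro is_u1_mul is_u1_sgnp su su' g h)
  next
    fix g h k assume g: "g \<in> carrier G" and h: "h \<in> carrier G" and k: "k \<in> carrier G"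
    show "kR3 g h = zadd (d1z G a (\<lambda>x. zadd (m x) (m' x)) g h) (kR1 g h)"
      using R[OF g h] R'[OF g h] by (simp add: d1z_add zadd_assoc zadd_lcomm)
    show "kL3 g h = zadd (zsub (zsub (d1z G a b3 g h) (d1z G a b1 g h)) (d1z G a (\<lambda>x. zadd (m x) (m' x)) g h)) (kL1 g h)"
      using L[OF g h] L'[OF g h]
      by (simp add: d1z_add zsub_eq zadd_assoc zadd_comm zadd_lcomm zadd_self zadd_self2 zadd_0L zadd_0R)
    define Dz where "Dz = d2z G a (\<lambda>x y. zdot (zsub (zsub (b2 x) (b1 x)) (m x)) (swp (a x) (m' y))) g h k"
    have agh: "a (g \<otimes>\<^bsub>G\<^esub> h) = a g + a h" using H1_add[OF aH g h] .
    have K: "zadd (zadd (zadd (zdot (kL2 g h) (swp (a g + a h) (m' k))) (zdot (zsub (zsub (b3 g) (b2 g)) (m' g)) (swp (a g) (kR3 h k))))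
        (zdot (kL1 g h) (swp (a g + a h) (m k)))) (zdot (zsub (zsub (b2 g) (b1 g)) (m g)) (swp (a g) (kR2 h k)))
       = zadd (zadd (zdot (kL1 g h) (swp (a g + a h) (zadd (m k) (m' k)))) (zdot (zsub (zsub (b3 g) (b1 g)) (zadd (m g) (m' g))) (swp (a g) (kR3 h k)))) Dz"
      unfolding Dz_def d2z_def agh
      by (rule key_trans) (use L[OF g h] R'[OF h k] in \<open>simp_all add: d1z_def\<close>)
    have K2: "umul (umul (umul (sgnp (zdot (kL2 g h) (swp (a (g \<otimes>\<^bsub>G\<^esub> h)) (m' k))))
                 (sgnp (zdot (zsub (zsub (b3 g) (b2 g)) (m' g)) (swp (a g) (kR3 h k)))))
                 (sgnp (zdot (kL1 g h) (swp (a (g \<otimes>\<^bsub>G\<^esub> h)) (m k)))))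
                 (sgnp (zdot (zsub (zsub (b2 g) (b1 g)) (m g)) (swp (a g) (kR2 h k))))
       = umul (umul (sgnp (zdot (kL1 g h) (swp (a (g \<otimes>\<^bsub>G\<^esub> h)) (zadd (m k) (m' k)))))
                 (sgnp (zdot (zsub (zsub (b3 g) (b1 g)) (zadd (m g) (m' g))) (swp (a g) (kR3 h k))))) (sgnp Dz)"
      using arg_cong[OF K, of sgnp] unfolding agh sgnp_zadd .
    have dd: "d2u G a (\<lambda>x y. umul (umul (\<sigma> x y) (\<sigma>' x y)) (sgnp (zdot (zsub (zsub (b2 x) (b1 x)) (m x)) (swp (a x) (m' y))))) g h k
       = umul (umul (d2u G a \<sigma> g h k) (d2u G a \<sigma>' g h k)) (sgnp Dz)"
      unfolding Dz_def d2u_mul d2u_sgnp ..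
    show "c3 g h k = umul (umul (umul (sgnp (zdot (kL1 g h) (swp (a (g \<otimes>\<^bsub>G\<^esub> h)) (zadd (m k) (m' k)))))
                 (sgnp (zdot (zsub (zsub (b3 g) (b1 g)) (zadd (m g) (m' g))) (swp (a g) (kR3 h k)))))
                 (d2u G a (\<lambda>x y. umul (umul (\<sigma> x y) (\<sigma>' x y)) (sgnp (zdot (zsub (zsub (b2 x) (b1 x)) (m x)) (swp (a x) (m' y))))) g h k))
                 (c1 g h k)"
      unfolding dd
      by (rule final_trans[OF K2 C'[OF g h k] C[OF g h k]])
  qed
qed

theorem lemma2p2:
  fixes G :: "('g, 'b) monoid_scheme"
  assumes "group G" and "finite (carrier G)"
  shows "equiv (PDt G) (pd_rel G)"
  unfolding equiv_def
proof (intro conjI)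
  show "pd_rel G \<subseteq> PDt G \<times> PDt G"
  proof
    fix p assume "p \<in> pd_rel G"
    then show "p \<in> PDt G \<times> PDt G"
      by (cases p) (auto simp: pd_rel_def)
  qed
next
  show "refl_on (PDt G) (pd_rel G)"
    unfolding refl_on_def
  proof
    fix x assume x: "x \<in> PDt G"
    obtain c kR kL b a where xe: "x = (c,kR,kL,b,a)" by (cases x) blast
    show "(x, x) \<in> pd_rel G" unfolding xe pd_rel_iff using x xe W_refl by blast
  qed
next
  show "sym (pd_rel G)"
    unfolding sym_def
  proof (intro allI impI)
    fix x y assume xy: "(x, y) \<in> pd_rel G"
    obtain c1 kR1 kL1 b1 a1 where xe: "x = (c1,kR1,kL1,b1,a1)" by (cases x) blast
    obtain c2 kR2 kL2 b2 a2 where ye: "y = (c2,kR2,kL2,b2,a2)" by (cases y) blast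
    from xy[unfolded xe ye pd_rel_iff] obtain m \<sigma> where
      P1: "(c1,kR1,kL1,b1,a1) \<in> PDt G" and P2: "(c2,kR2,kL2,b2,a2) \<in> PDt G"
      and aa: "\<forall>g\<in>carrier G. a1 g = a2 g" and w: "W G a1 c1 kR1 kL1 b1 c2 kR2 kL2 b2 m \<sigma>" by blast
    have w': "W G a1 c2 kR2 kL2 b2 c1 kR1 kL1 b1 m
     (\<lambda>x y. umul (uinv (\<sigma> x y)) (sgnp (zdot (zsub (zsub (b2 x) (b1 x)) (m x)) (swp (a1 x) (m y)))))"
      by (rule W_sym[OF assms(1) PDt_H1[OF P1] w])
    have w'': "W G a2 c2 kR2 kL2 b2 c1 kR1 kL1 b1 m
     (\<lambda>x y. umul (uinv (\<sigma> x y)) (sgnp (zdot (zsub (zsub (b2 x) (b1 x)) (m x)) (swp (a1 x) (m y)))))"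
      using w' W_cong[OF assms(1) aa] by blast
    show "(y, x) \<in> pd_rel G" unfolding xe ye pd_rel_iff using P1 P2 aa w'' by auto
  qed
next
  show "trans (pd_rel G)"
    unfolding trans_def
  proof (intro allI impI)
    fix x y z assume xy: "(x, y) \<in> pd_rel G" and yz: "(y, z) \<in> pd_rel G"
    obtain c1 kR1 kL1 b1 a1 where xe: "x = (c1,kR1,kL1,b1,a1)" by (cases x) blast
    obtain c2 kR2 kL2 b2 a2 where ye: "y = (c2,kR2,kL2,b2,a2)" by (cases y) blast
    obtain c3 kR3 kL3 b3 a3 where ze: "z = (c3,kR3,kL3,b3,a3)" by (cases z) blast
    from xy[unfolded xe ye pd_rel_iff] obtain m \<sigma> where
      P1: "(c1,kR1,kL1,b1,a1) \<in> PDt G" and P2: "(c2,kR2,kL2,b2,a2) \<in> PDt G"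
      and aa: "\<forall>g\<in>carrier G. a1 g = a2 g" and w: "W G a1 c1 kR1 kL1 b1 c2 kR2 kL2 b2 m \<sigma>" by blast
    from yz[unfolded ye ze pd_rel_iff] obtain m' \<sigma>' where
      P3: "(c3,kR3,kL3,b3,a3) \<in> PDt G"
      and aa': "\<forall>g\<in>carrier G. a2 g = a3 g" and w2: "W G a2 c2 kR2 kL2 b2 c3 kR3 kL3 b3 m' \<sigma>'" by blast
    have aa2: "\<forall>g\<in>carrier G. a2 g = a1 g" using aa by simp
    have w2': "W G a1 c2 kR2 kL2 b2 c3 kR3 kL3 b3 m' \<sigma>'"
      using w2 W_cong[OF assms(1) aa2] by blast
    have a13: "\<forall>g\<in>carrier G. a1 g = a3 g" using aa aa' by simp
    show "(x, z) \<in> pd_rel G" unfolding xe ze pd_rel_iff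
      using P1 P3 a13 W_trans[OF assms(1) PDt_H1[OF P1] w w2'] by blast
  qed
qed

end
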